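(* Let $h,k$ be positive integers with $\gcd(h,k)=1$ and $h+k$ odd. Then $$(k-1)B_{1}(h,k)+(h-1)B_{1}(k,h)=-\frac{1}{2}(k-1)(h-1).$$
   Context: $[x]$ denotes the greatest integer $\le x$. For integers $a,b$ with $b>0$ and $\gcd(a,b)=1$, define $$B_{1}(a,b)=\sum_{j=1}^{b-1}(-1)^{j+\left[\frac{aj}{b}\right]}\left[\frac{aj}{b}\right].$$ *)

theory Defs
  imports Complex_Main
begin

text \<open>B_1(a,b) = sum_{j=1}^{b-1} (-1)^(j + floor(aj/b)) * floor(aj/b), for b > 0, gcd(a,b)=1.
  Here floor(aj/b) = (a*j) div b since b > 0 (int division rounds toward minus infinity).\<close>
definition B1 :: "int \<Rightarrow> int \<Rightarrow> int" where
  "B1 a b = (\<Sum>j\<in>{1..b-1}. (-1) ^ nat (j + (a*j) div b) * ((a*j) div b))"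

end

theory Submission
  imports Defs
begin

definition T :: "int \<Rightarrow> int \<Rightarrow> int" where
  "T a b = (\<Sum>j\<in>{1..b-1}. (-1::int) ^ nat (j + (a*j) div b))"

lemma nodiv:
  fixes h k j :: int
  assumes "0 < k" "coprime h k" "0 < j" "j < k"
  shows "\<not> k dvd h*j"
proof
  assume "k dvd h*j"
  then have "k dvd j" using assms(2)
    by (metis coprime_commute coprime_dvd_mult_right_iff)
  then show False using assms zdvd_imp_le by fastforce
qed

lemma sign_eq:
  fixes a b :: int
  assumes "0 \<le> a" "0 \<le> b" "even (a + b)"
  shows "(-1::int) ^ nat a = (-1) ^ nat b"
proof -
  have "even (nat a) = even (nat b)" using assms
    by (simp add: even_nat_iff)
  then show ?thesis by (simp add: minus_one_power_iff)
qed

lemma reflect_div: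
  fixes h k j :: int
  assumes "0 < k" "0 < h" "\<not> k dvd h*j"
  shows "(h*(k-j)) div k = h - 1 - (h*j) div k"
proof -
  define q where "q = (h*j) div k"
  define r where "r = (h*j) mod k"
  have hj: "h*j = k*q + r" unfolding q_def r_def by simp
  have r0: "0 < r" "r < k"
  proof -
    have "r \<noteq> 0" using assms(3) unfolding r_def by (simp add: dvd_eq_mod_eq_0)
    moreover have "0 \<le> r" unfolding r_def using assms(1) by simp
    ultimately show "0 < r" by simp
    show "r < k" unfolding r_def using assms(1) by simp
  qed
  have "h*(k-j) = k*(h-q-1) + (k - r)" using hj by (simp add: algebra_simps)
  moreover have "0 \<le> k - r" "k - r < k" using r0 by auto
  ultimately have "(h*(k-j)) div k = h-q-1"
    using assms(1) by simp
  then show ?thesis unfolding q_def by simp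
qed

lemma div_lt:
  fixes x k h :: int
  assumes "0 < k" "x < k*h"
  shows "x div k < h"
proof -
  have "k*(x div k) + x mod k = x" by simp
  moreover have "0 \<le> x mod k" using assms(1) by simp
  ultimately have "k*(x div k) < k*h" using assms(2) by linarith
  then show ?thesis using assms(1) by simp
qed

lemma f_bounds:
  fixes h k j :: int
  assumes "0 < k" "0 < h" "0 < j" "j < k"
  shows "0 \<le> (h*j) div k" "(h*j) div k \<le> h - 1"
proof -
  show "0 \<le> (h*j) div k" using assms by (simp add: pos_imp_zdiv_nonneg_iff)
  have "h*j < k*h" using assms by (simp add: mult.commute)
  then have "(h*j) div k < h" using assms(1) div_lt by blast
  then show "(h*j) div k \<le> h - 1" by simp
qed

lemma reflect:
  fixes h k :: int
  assumes "0 < h" "0 < k" "coprime h k" "odd (h + k)"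
  shows "2 * B1 h k = (h - 1) * T h k"
proof -
  define f where "f j = (h*j) div k" for j
  define e where "e j = (-1::int) ^ nat (j + f j)" for j
  have B: "B1 h k = (\<Sum>j\<in>{1..k-1}. e j * f j)"
    unfolding B1_def e_def f_def by simp
  have Tt: "T h k = (\<Sum>j\<in>{1..k-1}. e j)"
    unfolding T_def e_def f_def by simp
  have "(\<Sum>j\<in>{1..k-1}. e j * f j) = (\<Sum>j\<in>{1..k-1}. e (k-j) * f (k-j))"
    by (rule sum.reindex_bij_witness[of _ "\<lambda>j. k-j" "\<lambda>j. k-j"]) auto
  also have "\<dots> = (\<Sum>j\<in>{1..k-1}. e j * (h - 1 - f j))"
  proof (rule sum.cong)
    fix j assume j: "j \<in> {1..k-1}"
    then have j0: "0 < j" "j < k" by auto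
    have nd: "\<not> k dvd h*j" using nodiv[OF assms(2,3) j0] .
    have fk: "f (k-j) = h - 1 - f j" unfolding f_def using reflect_div[OF assms(2,1) nd] .
    have fb: "0 \<le> f j" "f j \<le> h - 1" unfolding f_def using f_bounds[OF assms(2,1) j0] by auto
    have "e (k-j) = e j" unfolding e_def fk
      by (rule sign_eq) (use fb j0 assms(4) in auto)
    then show "e (k-j) * f (k-j) = e j * (h - 1 - f j)" using fk by simp
  qed simp
  also have "\<dots> = (h-1) * (\<Sum>j\<in>{1..k-1}. e j) - (\<Sum>j\<in>{1..k-1}. e j * f j)"
    by (simp add: algebra_simps sum_subtractf sum_distrib_left sum.distrib)
  finally show ?thesis using B Tt by simp
qed

lemma alt_sum: "(\<Sum>n\<in>{1..2*int t+1}. (-1::int)^nat n) = -1"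
proof (induction t)
  case 0
  then show ?case by simp
next
  case (Suc t)
  have eq: "{1..2*int (Suc t)+1} = insert (2*int t+3) (insert (2*int t+2) {1..2*int t+1})"
    by auto
  have a: "(-1::int)^nat (2*int t+3) = -1"
    by (simp add: minus_one_power_iff even_nat_iff)
  have b: "(-1::int)^nat (2*int t+2) = 1"
    by (simp add: minus_one_power_iff even_nat_iff)
  show ?case unfolding eq using Suc a b by simp
qed

lemma partition:
  fixes h k :: int
  assumes "0 < h" "0 < k" "coprime h k" "odd (h + k)"
  shows "T h k + T k h = -1"
proof -
  define F where "F j = j + (h*j) div k" for j
  define G where "G i = i + (k*i) div h" for i
  define s where "s n = (-1::int)^nat n" for n
  have cop2: "coprime k h" using assms(3) by (simp add: coprime_commute)
  have Fmono: "F j < F j'" if "j < j'" for j j'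
  proof -
    have "(h*j) div k \<le> (h*j') div k"
      using that assms by (intro zdiv_mono1) auto
    then show ?thesis unfolding F_def using that by simp
  qed
  have Gmono: "G j < G j'" if "j < j'" for j j'
  proof -
    have "(k*j) div h \<le> (k*j') div h"
      using that assms by (intro zdiv_mono1) auto
    then show ?thesis unfolding G_def using that by simp
  qed
  have injF: "inj_on F {1..k-1}"
    by (rule inj_onI) (metis Fmono less_irrefl linorder_neqE)
  have injG: "inj_on G {1..h-1}"
    by (rule inj_onI) (metis Gmono less_irrefl linorder_neqE)
  have Fr: "F ` {1..k-1} \<subseteq> {1..h+k-2}"
  proof
    fix n assume "n \<in> F ` {1..k-1}"
    then obtain j where j: "j \<in> {1..k-1}" "n = F j" by auto
    then have "0 \<le> (h*j) div k" "(h*j) div k \<le> h - 1"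
      using f_bounds[OF assms(2,1)] by auto
    then show "n \<in> {1..h+k-2}" using j unfolding F_def by auto
  qed
  have Gr: "G ` {1..h-1} \<subseteq> {1..h+k-2}"
  proof
    fix n assume "n \<in> G ` {1..h-1}"
    then obtain j where j: "j \<in> {1..h-1}" "n = G j" by auto
    then have "0 \<le> (k*j) div h" "(k*j) div h \<le> k - 1"
      using f_bounds[OF assms(1,2)] by auto
    then show "n \<in> {1..h+k-2}" using j unfolding G_def by auto
  qed
  have disj: "F ` {1..k-1} \<inter> G ` {1..h-1} = {}"
  proof (rule ccontr)
    assume "F ` {1..k-1} \<inter> G ` {1..h-1} \<noteq> {}"
    then obtain j i where j: "j \<in> {1..k-1}" and i: "i \<in> {1..h-1}" and eq: "F j = G i"
      by blast
    have ne: "k*i \<noteq> h*j"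
    proof
      assume "k*i = h*j"
      then have "k dvd h*j" by (metis dvd_triv_left)
      then show False using nodiv[OF assms(2,3), of j] j by auto
    qed
    show False
    proof (cases "k*i < h*j")
      case True
      have "(k*i) div k \<le> (h*j) div k" using True assms(2) by (intro zdiv_mono1) auto
      then have "i \<le> (h*j) div k" using assms(2) by simp
      moreover have "(k*i) div h < j" using div_lt[OF assms(1), of "k*i" j] True
        by (simp add: mult.commute)
      ultimately show False using eq unfolding F_def G_def by simp
    next
      case False
      then have lt: "h*j < k*i" using ne by simp
      have "(h*j) div h \<le> (k*i) div h" using lt assms(1) by (intro zdiv_mono1) auto
      then have "j \<le> (k*i) div h" using assms(1) by simp
      moreover have "(h*j) div k < i" using div_lt[OF assms(2), of "h*j" i] lt
        by (simp add: mult.commute)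
      ultimately show False using eq unfolding F_def G_def by simp
    qed
  qed
  have cF: "card (F ` {1..k-1}) = nat (k-1)" using injF by (simp add: card_image)
  have cG: "card (G ` {1..h-1}) = nat (h-1)" using injG by (simp add: card_image)
  have U: "F ` {1..k-1} \<union> G ` {1..h-1} = {1..h+k-2}"
  proof (rule card_subset_eq)
    show "finite {1..h+k-2}" by simp
    show "F ` {1..k-1} \<union> G ` {1..h-1} \<subseteq> {1..h+k-2}" using Fr Gr by auto
    have "card (F ` {1..k-1} \<union> G ` {1..h-1}) = nat (k-1) + nat (h-1)"
      using disj cF cG by (simp add: card_Un_disjoint)
    then show "card (F ` {1..k-1} \<union> G ` {1..h-1}) = card {1..h+k-2}"
      using assms(1,2) by simp
  qed
  have T1: "T h k = sum s (F ` {1..k-1})"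
    using injF unfolding T_def s_def F_def by (simp add: sum.reindex)
  have T2: "T k h = sum s (G ` {1..h-1})"
    using injG unfolding T_def s_def G_def by (simp add: sum.reindex)
  have "T h k + T k h = sum s {1..h+k-2}"
    unfolding T1 T2 U[symmetric] using disj by (simp add: sum.union_disjoint)
  moreover obtain t where t: "h + k - 2 = 2 * int t + 1"
  proof
    show "h + k - 2 = 2 * int (nat ((h+k-3) div 2)) + 1"
      using assms(1,2,4) by (auto elim!: oddE)
  qed
  ultimately show ?thesis using alt_sum[of t] unfolding s_def by simp
qed

theorem theorem14:
  fixes h k :: int
  assumes "h > 0" and "k > 0" and "gcd h k = 1" and "odd (h + k)"
  shows "real_of_int ((k - 1) * B1 h k + (h - 1) * B1 k h) = - (1/2) * real_of_int ((k - 1) * (h - 1))"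
proof -
  have c1: "coprime h k" using assms(3) by (simp add: coprime_iff_gcd_eq_1)
  have c2: "coprime k h" using c1 by (simp add: coprime_commute)
  have o2: "odd (k + h)" using assms(4) by (simp add: add.commute)
  have r1: "2 * B1 h k = (h - 1) * T h k" using reflect[OF assms(1,2) c1 assms(4)] .
  have r2: "2 * B1 k h = (k - 1) * T k h" using reflect[OF assms(2,1) c2 o2] .
  have p: "T h k + T k h = -1" using partition[OF assms(1,2) c1 assms(4)] .
  have "2 * ((k - 1) * B1 h k + (h - 1) * B1 k h) = (k-1)*(2 * B1 h k) + (h-1)*(2*B1 k h)"
    by (simp add: algebra_simps)
  also have "\<dots> = (k-1)*(h-1)*(T h k + T k h)" unfolding r1 r2 by (simp add: algebra_simps)
  also have "\<dots> = - ((k-1)*(h-1))" using p by simp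
  finally have "2 * ((k - 1) * B1 h k + (h - 1) * B1 k h) = - ((k-1)*(h-1))" .
  then have "real_of_int (2 * ((k - 1) * B1 h k + (h - 1) * B1 k h)) = real_of_int (- ((k-1)*(h-1)))"
    by simp
  then show ?thesis by simp
qed

end
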